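(* Let $S$ be a field and $X,Y\in\mathbb{M}_2(S)$ with determinants $\delta,\delta'$ and supertraces $\tau=\operatorname{str}(X)$, $\tau'=\operatorname{str}(Y)$. Then $[X,Y]\notin\mathrm{GL}_2(S)$ if and only if $$\delta\tau'^2+\delta'\tau^2+\operatorname{tr}(XY)\,\tau'\tau=\operatorname{str}(XY)\operatorname{str}(YX).$$ Moreover, $X$ is a scalar matrix if and only if this equation holds for all $Y\in\mathbb{M}_2(S)$.
   Context: $[X,Y]=XY-YX$. For $M=(m_{ij})\in\mathbb{M}_2(S)$, the supertrace is $\operatorname{str}(M)=m_{11}-m_{22}$. *)

theory Defs
  imports "HOL-Analysis.Analysis"
begin

definition str2 :: "'a::ring_1^2^2 \<Rightarrow> 'a" where
  "str2 M = M $ 1 $ 1 - M $ 2 $ 2"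

definition commutator :: "'a::ring_1^'n^'n \<Rightarrow> 'a^'n^'n \<Rightarrow> 'a^'n^'n" where
  "commutator X Y = X ** Y - Y ** X"

end

theory Submission
  imports Defs
begin

lemma key:
  fixes X Y :: "'a::field^2^2"
  shows "det X * (str2 Y)^2 + det Y * (str2 X)^2 + trace (X ** Y) * str2 Y * str2 X
          - str2 (X ** Y) * str2 (Y ** X) = - det (commutator X Y)"
  unfolding det_2 str2_def trace_def commutator_def
  apply (simp add: matrix_matrix_mult_def sum_2 power2_eq_square)
  by algebra

lemma eqv:
  fixes X Y :: "'a::field^2^2"
  shows "(det X * (str2 Y)^2 + det Y * (str2 X)^2 + trace (X ** Y) * str2 Y * str2 X
          = str2 (X ** Y) * str2 (Y ** X)) \<longleftrightarrow> det (commutator X Y) = 0"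
  using key[of X Y] by (metis eq_iff_diff_eq_0 neg_equal_0_iff_equal)

lemma detc:
  fixes X Y :: "'a::field^2^2"
  shows "det (commutator X Y) = (\<Sum>i\<in>UNIV. X$1$i * Y$i$1 - Y$1$i * X$i$1) *
      (\<Sum>i\<in>UNIV. X$2$i * Y$i$2 - Y$2$i * X$i$2)
     - (\<Sum>i\<in>UNIV. X$1$i * Y$i$2 - Y$1$i * X$i$2) * (\<Sum>i\<in>UNIV. X$2$i * Y$i$1 - Y$2$i * X$i$1)"
  unfolding det_2 commutator_def
  by (simp add: matrix_matrix_mult_def sum_subtractf)

lemma nonscalar:
  fixes X :: "'a::field^2^2"
  assumes "\<forall>Y. det (commutator X Y) = 0"
  shows "\<exists>c. X = mat c"
proof -
  have b: "X$1$2 = 0"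
  proof -
    have "det (commutator X (\<chi> i j. if i = 2 \<and> j = 1 then 1 else 0)) = 0" using assms by blast
    thus ?thesis by (simp add: detc sum_2)
  qed
  have c: "X$2$1 = 0"
  proof -
    have "det (commutator X (\<chi> i j. if i = 1 \<and> j = 2 then 1 else 0)) = 0" using assms by blast
    thus ?thesis by (simp add: detc sum_2)
  qed
  have d: "X$1$1 = X$2$2"
  proof -
    have "det (commutator X (\<chi> i j. if i \<noteq> j then 1 else 0)) = 0" using assms by blast
    thus ?thesis using b c by (simp add: detc sum_2 right_diff_distrib)
  qed
  have "X = mat (X$1$1)"
    unfolding vec_eq_iff mat_def using b c d by (simp add: forall_2)
  thus ?thesis by blast
qed

theorem corollary4p11:
  fixes X :: "'a::field^2^2"
  shows "(\<forall>Y :: 'a^2^2.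
            (\<not> invertible (commutator X Y)) \<longleftrightarrow>
            det X * (str2 Y)^2 + det Y * (str2 X)^2 + trace (X ** Y) * str2 Y * str2 X
              = str2 (X ** Y) * str2 (Y ** X))
       \<and> ((\<exists>c. X = mat c) \<longleftrightarrow>
            (\<forall>Y :: 'a^2^2.
              det X * (str2 Y)^2 + det Y * (str2 X)^2 + trace (X ** Y) * str2 Y * str2 X
                = str2 (X ** Y) * str2 (Y ** X)))"
proof (intro conjI allI iffI)
  fix Y :: "'a^2^2"
  show "\<not> invertible (commutator X Y) \<Longrightarrow> det X * (str2 Y)^2 + det Y * (str2 X)^2 + trace (X ** Y) * str2 Y * str2 X
              = str2 (X ** Y) * str2 (Y ** X)"
    using eqv invertible_det_nz by blast
  show "det X * (str2 Y)^2 + det Y * (str2 X)^2 + trace (X ** Y) * str2 Y * str2 X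
              = str2 (X ** Y) * str2 (Y ** X) \<Longrightarrow> \<not> invertible (commutator X Y)"
    using eqv invertible_det_nz by blast
next
  fix Y :: "'a^2^2"
  assume "\<exists>c. X = mat c"
  then obtain c where "X = mat c" by blast
  hence "commutator X Y = 0" unfolding commutator_def
    by (simp add: vec_eq_iff matrix_matrix_mult_def mat_def sum_2 forall_2)
  hence "det (commutator X Y) = 0" by (simp add: det_2)
  thus "det X * (str2 Y)^2 + det Y * (str2 X)^2 + trace (X ** Y) * str2 Y * str2 X
              = str2 (X ** Y) * str2 (Y ** X)" using eqv by blast
next
  assume "\<forall>Y. det X * (str2 Y)^2 + det Y * (str2 X)^2 + trace (X ** Y) * str2 Y * str2 X
              = str2 (X ** Y) * str2 (Y ** X)"
  hence "\<forall>Y. det (commutator X Y) = 0" using eqv by blast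
  thus "\<exists>c. X = mat c" by (rule nonscalar)
qed

end
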